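(* Let $X,Y\in\mathbb{S}^2_{++}$. Then $X\#_tY=X*_tY$ for all $t\in[0,1]$, where $X\#_tY=X^{1/2}(X^{-1/2}YX^{-1/2})^tX^{1/2}$ (all powers being the principal powers of symmetric positive definite matrices).
   Context: $\mathbb{S}^n_{++}$ denotes the set of real symmetric positive definite $n\times n$ matrices. For $X,Y\in\mathbb{S}^n_{++}$ the matrix $YX^{-1}$ has real positive eigenvalues; let $\alpha=\lambda_{\min}(YX^{-1})$ and $\beta=\lambda_{\max}(YX^{-1})$. For $0<\alpha\le\beta$ and $t\in\mathbb{R}$ set $\varphi_{\alpha\beta}(t)=\frac{\beta^t-\alpha^t}{\beta-\alpha}$ and $\psi_{\alpha\beta}(t)=\frac{\beta\alpha^t-\alpha\beta^t}{\beta-\alpha}$ if $\beta>\alpha$, and $\varphi_{\alpha\beta}(t)=t\alpha^{t-1}$, $\psi_{\alpha\beta}(t)=(1-t)\alpha^t$ if $\beta=\alpha$. The Thompson geodesic from $X$ to $Y$ is $X*_tY=\varphi_{\alpha\beta}(t)\,Y+\psi_{\alpha\beta}(t)\,X$. *)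

theory Defs
  imports "HOL-Analysis.Analysis"
begin

definition spd :: "real^'n^'n \<Rightarrow> bool" where
  "spd A \<longleftrightarrow> transpose A = A \<and> (\<forall>x. x \<noteq> 0 \<longrightarrow> x \<bullet> (A *v x) > 0)"

definition diagm :: "('n \<Rightarrow> real) \<Rightarrow> real^'n^'n" where
  "diagm d = (\<chi> i j. if i = j then d i else 0)"

definition spd_pow :: "real^'n^'n \<Rightarrow> real \<Rightarrow> real^'n^'n" where
  "spd_pow A t = (SOME B. \<exists>Q d. orthogonal_matrix Q \<and> (\<forall>i. d i > 0) \<and>
      A = Q ** diagm d ** transpose Q \<and> B = Q ** diagm (\<lambda>i. d i powr t) ** transpose Q)"

definition geo_mean :: "real^'n^'n \<Rightarrow> real \<Rightarrow> real^'n^'n \<Rightarrow> real^'n^'n" where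
  "geo_mean X t Y = spd_pow X (1/2) **
     spd_pow (spd_pow X (-1/2) ** Y ** spd_pow X (-1/2)) t ** spd_pow X (1/2)"

definition real_eigenvalues :: "real^'n^'n \<Rightarrow> real set" where
  "real_eigenvalues M = {c. \<exists>v. v \<noteq> 0 \<and> M *v v = c *\<^sub>R v}"

definition lambda_min :: "real^'n^'n \<Rightarrow> real" where
  "lambda_min M = Min (real_eigenvalues M)"

definition lambda_max :: "real^'n^'n \<Rightarrow> real" where
  "lambda_max M = Max (real_eigenvalues M)"

definition phi_ab :: "real \<Rightarrow> real \<Rightarrow> real \<Rightarrow> real" where
  "phi_ab \<alpha> \<beta> t = (if \<beta> > \<alpha> then (\<beta> powr t - \<alpha> powr t) / (\<beta> - \<alpha>)
                      else t * \<alpha> powr (t - 1))"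

definition psi_ab :: "real \<Rightarrow> real \<Rightarrow> real \<Rightarrow> real" where
  "psi_ab \<alpha> \<beta> t = (if \<beta> > \<alpha> then (\<beta> * \<alpha> powr t - \<alpha> * \<beta> powr t) / (\<beta> - \<alpha>)
                      else (1 - t) * \<alpha> powr t)"

definition thompson_geo :: "real^'n^'n \<Rightarrow> real \<Rightarrow> real^'n^'n \<Rightarrow> real^'n^'n" where
  "thompson_geo X t Y =
     (let M = Y ** matrix_inv X; \<alpha> = lambda_min M; \<beta> = lambda_max M
      in phi_ab \<alpha> \<beta> t *\<^sub>R Y + psi_ab \<alpha> \<beta> t *\<^sub>R X)"

end

theory Submission
  imports Defs
begin

declare transpose_matrix_vector[simp del]

lemma mm_scaleR_right: "(A::real^'n^'m) ** (c *\<^sub>R B) = c *\<^sub>R (A ** (B::real^'p^'n))"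
  by (simp add: vec_eq_iff matrix_matrix_mult_def sum_distrib_left mult.left_commute)
lemma mm_scaleR_left: "(c *\<^sub>R A) ** (B::real^'p^'n) = c *\<^sub>R ((A::real^'n^'m) ** B)"
  by (simp add: vec_eq_iff matrix_matrix_mult_def sum_distrib_left mult.assoc)
lemma mm_add_right: "(A::real^'n^'m) ** (B + C) = A ** B + A ** (C::real^'p^'n)"
  by (rule matrix_add_ldistrib)
lemma mm_add_left: "((A::real^'n^'m) + B) ** (C::real^'p^'n) = A ** C + B ** C"
  by (simp add: vec_eq_iff matrix_matrix_mult_def sum.distrib distrib_right)

lemma diagm_mult: "diagm e ** diagm g = (diagm (\<lambda>i. e i * g i) :: real^'n^'n)"
proof -
  have "(\<Sum>k\<in>UNIV. (if i = k then e i else 0) * (if k = j then g k else 0)) = (if i = j then e i * g i else 0)"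
    for i j :: 'n
  proof -
    have "(\<lambda>k. (if i = k then e i else 0) * (if k = j then g k else 0)) = (\<lambda>k. if k = i then (if i = j then e i * g i else 0) else (0::real))"
      by (auto simp: fun_eq_iff)
    then show ?thesis by (simp only: sum.delta[OF finite]) simp
  qed
  then show ?thesis by (simp add: vec_eq_iff matrix_matrix_mult_def diagm_def)
qed

lemma transpose_diagm[simp]: "transpose (diagm e) = diagm e"
  by (simp add: vec_eq_iff transpose_def diagm_def)

lemma diagm_const: "diagm (\<lambda>i. c) = (c *\<^sub>R mat 1 :: real^'n^'n)"
  by (simp add: vec_eq_iff diagm_def mat_def)

lemma conj_mult:
  assumes "orthogonal_matrix (Q::real^'n^'n)"
  shows "(Q ** diagm e ** transpose Q) ** (Q ** diagm g ** transpose Q) = Q ** diagm (\<lambda>i. e i * g i) ** transpose Q"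
proof -
  have h: "transpose Q ** Q = mat 1" using assms by (simp add: orthogonal_matrix_def)
  have "(Q ** diagm e ** transpose Q) ** (Q ** diagm g ** transpose Q) = Q ** diagm e ** (transpose Q ** Q) ** diagm g ** transpose Q"
    by (simp add: matrix_mul_assoc)
  also have "\<dots> = Q ** (diagm e ** diagm g) ** transpose Q" using h by (simp add: matrix_mul_assoc)
  finally show ?thesis by (simp add: diagm_mult)
qed

lemma conj_sym: "transpose (Q ** diagm e ** transpose Q) = (Q ** diagm e ** transpose (Q::real^'n^'n))"
  by (simp add: matrix_transpose_mul matrix_mul_assoc)

lemma conj_one: "orthogonal_matrix (Q::real^'n^'n) \<Longrightarrow> Q ** diagm (\<lambda>i. 1) ** transpose Q = mat 1"
  by (simp add: diagm_const orthogonal_matrix_def)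

lemma matrix_inv_eq: assumes "(A::real^'n^'n) ** B = mat 1" "B ** A = mat 1" shows "matrix_inv A = B"
proof -
  have ex: "\<exists>A'. A ** A' = mat 1 \<and> A' ** A = mat 1" using assms by blast
  then have h: "A ** matrix_inv A = mat 1 \<and> matrix_inv A ** A = mat 1"
    unfolding matrix_inv_def by (rule someI_ex)
  have "matrix_inv A = matrix_inv A ** (A ** B)" using assms by simp
  also have "\<dots> = B" using h by (simp add: matrix_mul_assoc)
  finally show ?thesis .
qed

lemma eigI: "v \<noteq> 0 \<Longrightarrow> M *v v = c *\<^sub>R v \<Longrightarrow> c \<in> real_eigenvalues M"
  unfolding real_eigenvalues_def by (rule CollectI, rule exI[of _ v], simp)
lemma eigE: "c \<in> real_eigenvalues M \<Longrightarrow> \<exists>v. v \<noteq> 0 \<and> M *v v = c *\<^sub>R v"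
  unfolding real_eigenvalues_def by simp



lemma eig_conj:
  assumes o: "orthogonal_matrix (Q::real^2^2)" and A: "A = Q ** diagm d ** transpose Q"
  shows "real_eigenvalues A = {d 1, d 2}"
proof -
  have QT: "transpose Q ** Q = mat 1" "Q ** transpose Q = mat 1" using o by (auto simp: orthogonal_matrix_def)
  have dax: "diagm d *v axis i 1 = d i *\<^sub>R axis i 1" for i :: 2
    by (simp add: vec_eq_iff diagm_def matrix_vector_mult_def axis_def forall_2 sum_2)
  have ev: "d i \<in> real_eigenvalues A" for i
  proof -
    let ?v = "Q *v axis i 1"
    have "?v \<noteq> 0"
      by (metis QT(1) axis_nth matrix_vector_mul_assoc matrix_vector_mul_lid matrix_vector_mult_0_right zero_index zero_neq_one)
    moreover have "A *v ?v = d i *\<^sub>R ?v"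
    proof -
      have "A *v ?v = Q *v (diagm d *v ((transpose Q ** Q) *v axis i 1))"
        by (simp add: A matrix_vector_mul_assoc matrix_mul_assoc)
      also have "\<dots> = d i *\<^sub>R ?v" using QT by (simp add: dax matrix_vector_mult_scaleR)
      finally show ?thesis .
    qed
    ultimately show ?thesis by (rule eigI)
  qed
  have sub: "c \<in> {d 1, d 2}" if c: "c \<in> real_eigenvalues A" for c
  proof -
    obtain v where v: "v \<noteq> 0" "A *v v = c *\<^sub>R v" using eigE[OF c] by blast
    let ?w = "transpose Q *v v"
    have "Q *v ?w = v" using QT by (simp add: matrix_vector_mul_assoc)
    then have w0: "?w \<noteq> 0" using v(1) by auto
    have "diagm d *v ?w = transpose Q *v (A *v v)"
      using QT by (simp add: A matrix_vector_mul_assoc matrix_mul_assoc)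
    also have "\<dots> = c *\<^sub>R ?w" using v(2) by (simp add: matrix_vector_mult_scaleR)
    finally have eq: "diagm d *v ?w = c *\<^sub>R ?w" .
    have comp: "d i * ?w $ i = c * ?w $ i" for i
    proof -
      have "(diagm d *v ?w) $ i = (c *\<^sub>R ?w) $ i" using eq by simp
      then show ?thesis
        using exhaust_2[of i] by (auto simp: diagm_def matrix_vector_mult_def sum_2)
    qed
    obtain i where "?w $ i \<noteq> 0" using w0 by (metis vec_eq_iff zero_index)
    then have "c = d i" using comp[of i] by simp
    then show ?thesis by (metis exhaust_2 insert_iff)
  qed
  show ?thesis using ev sub by blast
qed

definition cf1 :: "(real \<Rightarrow> real) \<Rightarrow> real \<Rightarrow> real \<Rightarrow> real" where
  "cf1 f a b = (if a < b then (f b - f a) / (b - a) else 0)"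
definition cf0 :: "(real \<Rightarrow> real) \<Rightarrow> real \<Rightarrow> real \<Rightarrow> real" where
  "cf0 f a b = (if a < b then (b * f a - a * f b) / (b - a) else f a)"

lemma cf_interp: assumes "a \<le> b" "x = a \<or> x = b" shows "cf1 f a b * x + cf0 f a b = f x"
proof (cases "a < b")
  case True
  then have ne: "b - a \<noteq> 0" by simp
  have "cf1 f a b * x + cf0 f a b = ((f b - f a) * x + (b * f a - a * f b)) / (b - a)"
    using True unfolding cf1_def cf0_def by (simp add: add_divide_distrib)
  also have "\<dots> = f x"
    using assms(2) ne by (auto simp: divide_simps algebra_simps)
  finally show ?thesis .
next
  case False then show ?thesis using assms unfolding cf1_def cf0_def by auto
qed

definition fcalc :: "(real \<Rightarrow> real) \<Rightarrow> real^2^2 \<Rightarrow> real^2^2" where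
  "fcalc f A = (let E = real_eigenvalues A in
     cf1 f (Min E) (Max E) *\<^sub>R A + cf0 f (Min E) (Max E) *\<^sub>R mat 1)"

lemma decomp_fcalc:
  assumes o: "orthogonal_matrix (Q::real^2^2)" and A: "A = Q ** diagm d ** transpose Q"
  shows "Q ** diagm (\<lambda>i. f (d i)) ** transpose Q = fcalc f A"
proof -
  have E: "real_eigenvalues A = {d 1, d 2}" by (rule eig_conj[OF o A])
  define a where "a = min (d 1) (d 2)"
  define b where "b = max (d 1) (d 2)"
  have mm: "Min (real_eigenvalues A) = a" "Max (real_eigenvalues A) = b"
    unfolding E a_def b_def by (auto simp: min_def max_def)
  have dg: "diagm (\<lambda>i. f (d i)) = cf1 f a b *\<^sub>R diagm d + cf0 f a b *\<^sub>R mat 1"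
  proof -
    have "f (d i) = cf1 f a b * d i + cf0 f a b" for i :: 2
      using cf_interp[of a b "d i" f] exhaust_2[of i] unfolding a_def b_def by (auto simp: min_def max_def)
    then show ?thesis by (simp add: vec_eq_iff diagm_def mat_def)
  qed
  have "Q ** diagm (\<lambda>i. f (d i)) ** transpose Q = cf1 f a b *\<^sub>R A + cf0 f a b *\<^sub>R (Q ** transpose Q)"
    unfolding dg A by (simp add: mm_add_left mm_add_right mm_scaleR_left mm_scaleR_right)
  also have "\<dots> = fcalc f A" using o by (simp add: fcalc_def mm orthogonal_matrix_def Let_def)
  finally show ?thesis .
qed

lemma spd_pow_eq:
  assumes o: "orthogonal_matrix (Q::real^2^2)" and d: "\<forall>i. d i > 0" and A: "A = Q ** diagm d ** transpose Q"
  shows "spd_pow A t = Q ** diagm (\<lambda>i. d i powr t) ** transpose Q"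
proof -
  let ?P = "\<lambda>B. \<exists>Q d. orthogonal_matrix Q \<and> (\<forall>i. d i > 0) \<and>
      A = Q ** diagm d ** transpose Q \<and> B = Q ** diagm (\<lambda>i. d i powr t) ** transpose Q"
  have "?P (Q ** diagm (\<lambda>i. d i powr t) ** transpose Q)" using o d A by blast
  then have "?P (spd_pow A t)" unfolding spd_pow_def by (rule someI)
  then obtain Q' d' where h: "orthogonal_matrix Q'" "A = Q' ** diagm d' ** transpose Q'"
     "spd_pow A t = Q' ** diagm (\<lambda>i. d' i powr t) ** transpose Q'" by blast
  show ?thesis using decomp_fcalc[OF h(1,2), of "\<lambda>x. x powr t"] decomp_fcalc[OF o A, of "\<lambda>x. x powr t"] h(3)
    by simp
qed




lemma rot_decomp:
  fixes A :: "real^2^2"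
  assumes sym: "A$1$2 = A$2$1" and pq: "p^2 + q^2 = 1"
    and e1: "A$1$1 * p + A$1$2 * q = l * p" and e2: "A$1$2 * p + A$2$2 * q = l * q"
  defines "Q \<equiv> (\<chi> i j. if i = 1 then (if j = 1 then p else -q) else (if j = 1 then q else p)) :: real^2^2"
  shows "orthogonal_matrix Q \<and> A = Q ** diagm (\<lambda>i. if i = 1 then l else A$1$1 + A$2$2 - l) ** transpose Q"
proof
  show "orthogonal_matrix Q"
    unfolding orthogonal_matrix_def Q_def
    using pq by (simp add: vec_eq_iff matrix_matrix_mult_def transpose_def mat_def forall_2 sum_2 power2_eq_square algebra_simps)
  have h1: "A$1$1 = l*p^2 + (A$1$1 + A$2$2 - l)*q^2"
  proof -
    have "l*p^2 + (A$1$1 + A$2$2 - l)*q^2 = p*(l*p) + (A$1$1 + A$2$2)*q^2 - q*(l*q)" by (simp add: power2_eq_square algebra_simps)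
    also have "\<dots> = A$1$1 * (p^2+q^2)" by (simp only: e1[symmetric] e2[symmetric]) (simp add: power2_eq_square algebra_simps)
    finally show ?thesis using pq by simp
  qed
  have h2: "A$2$2 = l*q^2 + (A$1$1 + A$2$2 - l)*p^2"
  proof -
    have "l*q^2 + (A$1$1 + A$2$2 - l)*p^2 = q*(l*q) + (A$1$1 + A$2$2)*p^2 - p*(l*p)" by (simp add: power2_eq_square algebra_simps)
    also have "\<dots> = A$2$2 * (p^2+q^2)" by (simp only: e1[symmetric] e2[symmetric]) (simp add: power2_eq_square algebra_simps)
    finally show ?thesis using pq by simp
  qed
  have h3: "A$1$2 = l*p*q - (A$1$1 + A$2$2 - l)*p*q"
  proof -
    have "l*p*q - (A$1$1 + A$2$2 - l)*p*q = q*(l*p) + p*(l*q) - (A$1$1 + A$2$2)*p*q" by (simp add: algebra_simps)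
    also have "\<dots> = A$1$2 * (p^2+q^2)" by (simp only: e1[symmetric] e2[symmetric]) (simp add: power2_eq_square algebra_simps)
    finally show ?thesis using pq by simp
  qed
  show "A = Q ** diagm (\<lambda>i. if i = 1 then l else A$1$1 + A$2$2 - l) ** transpose Q"
    unfolding Q_def
    apply (simp add: vec_eq_iff matrix_matrix_mult_def transpose_def diagm_def forall_2 sum_2)
    using h1 h2 h3 sym by (simp add: power2_eq_square algebra_simps)
qed

lemma sym_decomp:
  fixes A :: "real^2^2"
  assumes sym: "transpose A = A"
  shows "\<exists>Q d. orthogonal_matrix Q \<and> A = Q ** diagm d ** transpose Q"
proof -
  have s: "A$1$2 = A$2$1"
  proof -
    have "transpose A $ 2 $ 1 = A$1$2" by (simp add: transpose_def)
    then show ?thesis using sym by simp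
  qed
  define a where "a = A$1$1"
  define b where "b = A$1$2"
  define c where "c = A$2$2"
  have "\<exists>p q l. p^2 + q^2 = 1 \<and> a * p + b * q = l * p \<and> b * p + c * q = l * q"
  proof (cases "b = 0")
    case True
    then show ?thesis by (intro exI[of _ 1] exI[of _ 0] exI[of _ a]) simp
  next
    case False
    define r where "r = sqrt ((a-c)^2 + 4*b^2)"
    have r2: "r^2 = (a-c)^2 + 4*b^2" unfolding r_def by simp
    define l where "l = (a + c + r)/2"
    have char: "l*l - (a+c)*l + a*c - b^2 = 0"
      unfolding l_def using r2 by (simp add: power2_eq_square field_simps)
    define n where "n = sqrt (b^2 + (l-a)^2)"
    have n2: "n^2 = b^2 + (l-a)^2" unfolding n_def by simp
    have "b^2 > 0" using False by simp
    then have "b^2 + (l-a)^2 > 0" by (simp add: add_pos_nonneg)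
    then have npos: "n > 0" unfolding n_def by simp
    have "(b/n)^2 + ((l-a)/n)^2 = 1" using n2 npos False by (simp add: power_divide add_divide_distrib[symmetric])
    moreover have "a * (b/n) + b * ((l-a)/n) = l * (b/n)" using npos by (simp add: field_simps)
    moreover have "b * (b/n) + c * ((l-a)/n) = l * ((l-a)/n)"
      using npos char by (simp add: field_simps power2_eq_square)
    ultimately show ?thesis by blast
  qed
  then obtain p q l where "p^2 + q^2 = 1" "a * p + b * q = l * p" "b * p + c * q = l * q" by blast
  from rot_decomp[OF s this[unfolded a_def b_def c_def]] show ?thesis by blast
qed

lemma spd_decomp_pos:
  assumes A: "spd A" and o: "orthogonal_matrix (Q::real^'n^'n)" and dec: "A = Q ** diagm d ** transpose Q"
  shows "d i > 0"
proof -
  have QT: "transpose Q ** Q = mat 1" using o by (auto simp: orthogonal_matrix_def)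
  let ?v = "Q *v axis i 1"
  have v0: "?v \<noteq> 0"
    by (metis QT axis_nth matrix_vector_mul_assoc matrix_vector_mul_lid matrix_vector_mult_0_right zero_index zero_neq_one)
  have dax: "diagm d *v axis i 1 = d i *\<^sub>R axis i 1"
  proof -
    have "(\<Sum>k\<in>UNIV. (if j = k then d j else 0) * axis i 1 $ k) = d j * axis i 1 $ j" for j
    proof -
      have "(\<lambda>k. (if j = k then d j else 0) * axis i 1 $ k) = (\<lambda>k. if k = j then d j * axis i (1::real) $ j else 0)"
        by (auto simp: fun_eq_iff)
      then show ?thesis by (simp only: sum.delta[OF finite]) simp
    qed
    then show ?thesis by (auto simp: vec_eq_iff diagm_def matrix_vector_mult_def axis_def)
  qed
  have "A *v ?v = Q *v (diagm d *v ((transpose Q ** Q) *v axis i 1))"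
    by (simp add: dec matrix_vector_mul_assoc matrix_mul_assoc)
  also have "\<dots> = d i *\<^sub>R ?v" using QT by (simp add: dax matrix_vector_mult_scaleR)
  finally have "?v \<bullet> (A *v ?v) = d i * (?v \<bullet> ?v)" by simp
  moreover have "?v \<bullet> (A *v ?v) > 0" using A v0 unfolding spd_def by blast
  moreover have "?v \<bullet> ?v > 0" using v0 by simp
  ultimately show ?thesis by (metis zero_less_mult_pos2)
qed

lemma spd_decomp:
  fixes A :: "real^2^2"
  assumes "spd A"
  shows "\<exists>Q d. orthogonal_matrix Q \<and> (\<forall>i. d i > 0) \<and> A = Q ** diagm d ** transpose Q"
  using sym_decomp[of A] assms spd_decomp_pos[OF assms] unfolding spd_def by metis




lemma conj_pow_mult:
  assumes o: "orthogonal_matrix (Q::real^'n^'n)" and d: "\<forall>i. d i > 0"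
  shows "(Q ** diagm (\<lambda>i. d i powr a) ** transpose Q) ** (Q ** diagm (\<lambda>i. d i powr b) ** transpose Q)
         = Q ** diagm (\<lambda>i. d i powr (a + b)) ** transpose Q"
proof -
  have "(\<lambda>i. d i powr a * d i powr b) = (\<lambda>i. d i powr (a + b))"
    by (simp add: fun_eq_iff powr_add)
  then show ?thesis using conj_mult[OF o, of "\<lambda>i. d i powr a" "\<lambda>i. d i powr b"] by simp
qed

lemma inner_mv_sym: "transpose R = R \<Longrightarrow> x \<bullet> ((R::real^'n^'n) *v w) = (R *v x) \<bullet> w"
proof -
  assume h: "transpose R = R"
  have "x \<bullet> (R *v w) = (x v* R) \<bullet> w" by (simp add: dot_lmul_matrix)
  moreover have "x v* R = R *v x" using transpose_matrix_vector[of R x] h by simp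
  ultimately show ?thesis by simp
qed

theorem proposition3p2:
  fixes X Y :: "real^2^2" and t :: real
  assumes "spd X" and "spd Y" and "0 \<le> t" and "t \<le> 1"
  shows "geo_mean X t Y = thompson_geo X t Y"
proof -
  obtain Q d where o: "orthogonal_matrix Q" and d: "\<forall>i. d i > 0" and X: "X = Q ** diagm d ** transpose Q"
    using spd_decomp[OF assms(1)] by blast
  have dd: "(\<lambda>i. d i powr 1) = d" using d by (simp add: fun_eq_iff abs_of_pos)
  have Xp: "X = Q ** diagm (\<lambda>i. d i powr 1) ** transpose Q" unfolding dd by (rule X)
  have I1: "Q ** diagm (\<lambda>i. d i powr 0) ** transpose Q = mat 1"
  proof -
    have "(\<lambda>i. d i powr 0) = (\<lambda>i. 1)" using d by (simp add: fun_eq_iff less_imp_neq[symmetric])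
    then show ?thesis using conj_one[OF o] by simp
  qed
  define S where "S = Q ** diagm (\<lambda>i. d i powr (1/2)) ** transpose Q"
  define R where "R = Q ** diagm (\<lambda>i. d i powr (-1/2)) ** transpose Q"
  define RR where "RR = Q ** diagm (\<lambda>i. d i powr (-1)) ** transpose Q"
  have pS: "spd_pow X (1/2) = S" unfolding S_def by (rule spd_pow_eq[OF o d X])
  have pR: "spd_pow X (-1/2) = R" unfolding R_def by (rule spd_pow_eq[OF o d X])
  have SR: "S ** R = mat 1" unfolding S_def R_def using conj_pow_mult[OF o d, of "1/2" "-1/2"] I1 by simp
  have RS: "R ** S = mat 1" unfolding S_def R_def using conj_pow_mult[OF o d, of "-1/2" "1/2"] I1 by simp
  have SS: "S ** S = X" unfolding S_def using conj_pow_mult[OF o d, of "1/2" "1/2"] Xp by simp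
  have RRe: "R ** R = RR" unfolding R_def RR_def using conj_pow_mult[OF o d, of "-1/2" "-1/2"] by simp
  have XRR: "X ** RR = mat 1" unfolding RR_def Xp using conj_pow_mult[OF o d, of 1 "-1"] I1 by simp
  have RRX: "RR ** X = mat 1" unfolding RR_def Xp using conj_pow_mult[OF o d, of "-1" 1] I1 by simp
  have inv: "matrix_inv X = R ** R" using matrix_inv_eq[OF XRR RRX] RRe by simp
  have Rsym: "transpose R = R" unfolding R_def by (rule conj_sym)
  have Ysym: "transpose Y = Y" using assms(2) unfolding spd_def by blast
  define M where "M = R ** Y ** R"
  have SMS: "S ** M ** S = Y"
  proof -
    have "S ** M ** S = (S ** R) ** Y ** (R ** S)" unfolding M_def by (simp add: matrix_mul_assoc)
    then show ?thesis using SR RS by simp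
  qed
  have Msym: "transpose M = M" unfolding M_def using Rsym Ysym by (simp add: matrix_transpose_mul matrix_mul_assoc)
  have Mspd: "spd M" unfolding spd_def
  proof (intro conjI allI impI Msym)
    fix x :: "real^2" assume x: "x \<noteq> 0"
    have Rx: "R *v x \<noteq> 0"
    proof
      assume "R *v x = 0"
      then have "S *v (R *v x) = 0" by simp
      then show False using x SR by (simp add: matrix_vector_mul_assoc)
    qed
    have "x \<bullet> (M *v x) = (R *v x) \<bullet> (Y *v (R *v x))"
      unfolding M_def by (simp add: matrix_vector_mul_assoc[symmetric] inner_mv_sym[OF Rsym])
    also have "\<dots> > 0" using assms(2) Rx unfolding spd_def by blast
    finally show "x \<bullet> (M *v x) > 0" .
  qed
  have eigeq: "real_eigenvalues (Y ** matrix_inv X) = real_eigenvalues M"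
  proof
    show "real_eigenvalues (Y ** matrix_inv X) \<subseteq> real_eigenvalues M"
    proof
      fix c assume "c \<in> real_eigenvalues (Y ** matrix_inv X)"
      then obtain u where u: "u \<noteq> 0" "(Y ** (R ** R)) *v u = c *\<^sub>R u" using eigE unfolding inv by blast
      have "R *v u \<noteq> 0"
      proof
        assume "R *v u = 0"
        then have "S *v (R *v u) = 0" by simp
        then show False using u SR by (simp add: matrix_vector_mul_assoc)
      qed
      moreover have "M *v (R *v u) = c *\<^sub>R (R *v u)"
      proof -
        have "M *v (R *v u) = R *v ((Y ** (R ** R)) *v u)"
          unfolding M_def by (simp add: matrix_vector_mul_assoc matrix_mul_assoc)
        then show ?thesis using u(2) by (simp add: matrix_vector_mult_scaleR)
      qed
      ultimately show "c \<in> real_eigenvalues M" by (rule eigI)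
    qed
    show "real_eigenvalues M \<subseteq> real_eigenvalues (Y ** matrix_inv X)"
    proof
      fix c assume "c \<in> real_eigenvalues M"
      then obtain v where v: "v \<noteq> 0" "M *v v = c *\<^sub>R v" using eigE by blast
      have "S *v v \<noteq> 0"
      proof
        assume "S *v v = 0"
        then have "R *v (S *v v) = 0" by simp
        then show False using v RS by (simp add: matrix_vector_mul_assoc)
      qed
      moreover have "(Y ** (R ** R)) *v (S *v v) = c *\<^sub>R (S *v v)"
      proof -
        have "(Y ** (R ** R)) *v (S *v v) = S *v (M *v v)"
        proof -
          have "(Y ** (R ** R)) ** S = (Y ** R) ** (R ** S)" by (simp add: matrix_mul_assoc)
          also have "\<dots> = Y ** R" using RS by simp
          also have "\<dots> = (S ** R) ** Y ** R" using SR by simp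
          also have "\<dots> = S ** M" unfolding M_def by (simp add: matrix_mul_assoc)
          finally have "(Y ** (R ** R)) ** S = S ** M" .
          then show ?thesis by (simp add: matrix_vector_mul_assoc)
        qed
        then show ?thesis using v(2) by (simp add: matrix_vector_mult_scaleR)
      qed
      ultimately show "c \<in> real_eigenvalues (Y ** matrix_inv X)" unfolding inv by (rule eigI)
    qed
  qed
  obtain Q2 e where o2: "orthogonal_matrix Q2" and e: "\<forall>i. e i > 0" and M: "M = Q2 ** diagm e ** transpose Q2"
    using spd_decomp[OF Mspd] by blast
  have powM: "spd_pow M t = fcalc (\<lambda>x. x powr t) M"
    using spd_pow_eq[OF o2 e M] decomp_fcalc[OF o2 M, of "\<lambda>x. x powr t"] by simp
  have E: "real_eigenvalues M = {e 1, e 2}" by (rule eig_conj[OF o2 M])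
  define \<alpha> where "\<alpha> = Min (real_eigenvalues M)"
  define \<beta> where "\<beta> = Max (real_eigenvalues M)"
  have ab: "\<alpha> = min (e 1) (e 2)" "\<beta> = max (e 1) (e 2)" unfolding \<alpha>_def \<beta>_def E by (auto simp: min_def max_def)
  have apos: "\<alpha> > 0" using e ab by simp
  have geo: "geo_mean X t Y = cf1 (\<lambda>x. x powr t) \<alpha> \<beta> *\<^sub>R Y + cf0 (\<lambda>x. x powr t) \<alpha> \<beta> *\<^sub>R X"
  proof -
    have "geo_mean X t Y = S ** (cf1 (\<lambda>x. x powr t) \<alpha> \<beta> *\<^sub>R M + cf0 (\<lambda>x. x powr t) \<alpha> \<beta> *\<^sub>R mat 1) ** S"
      unfolding geo_mean_def pS pR M_def[symmetric] powM fcalc_def Let_def \<alpha>_def[symmetric] \<beta>_def[symmetric] by simp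
    also have "\<dots> = cf1 (\<lambda>x. x powr t) \<alpha> \<beta> *\<^sub>R (S ** M ** S) + cf0 (\<lambda>x. x powr t) \<alpha> \<beta> *\<^sub>R (S ** S)"
      by (simp add: mm_add_left mm_add_right mm_scaleR_left mm_scaleR_right)
    finally show ?thesis using SMS SS by simp
  qed
  have th: "thompson_geo X t Y = phi_ab \<alpha> \<beta> t *\<^sub>R Y + psi_ab \<alpha> \<beta> t *\<^sub>R X"
    unfolding thompson_geo_def Let_def lambda_min_def lambda_max_def eigeq \<alpha>_def \<beta>_def by simp
  show ?thesis
  proof (cases "\<alpha> < \<beta>")
    case True
    then show ?thesis unfolding geo th by (simp add: cf1_def cf0_def phi_ab_def psi_ab_def)
  next
    case False
    have ab2: "\<alpha> = \<beta>" using False ab by simp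
    have e12: "e 1 = \<alpha>" "e 2 = \<alpha>" using ab ab2 by (auto simp: min_def max_def split: if_splits)
    have ee: "e = (\<lambda>i. \<alpha>)"
    proof
      fix i :: 2 show "e i = \<alpha>" using exhaust_2[of i] e12 by auto
    qed
    have Ma: "M = \<alpha> *\<^sub>R mat 1"
      using o2 unfolding M ee diagm_const by (simp add: mm_scaleR_left mm_scaleR_right orthogonal_matrix_def)
    have Ya: "Y = \<alpha> *\<^sub>R X"
      using SMS SS unfolding Ma by (simp add: mm_scaleR_left mm_scaleR_right)
    have pw: "\<alpha> powr (t - 1) * \<alpha> = \<alpha> powr t"
      using apos powr_add[of \<alpha> "t - 1" 1] by simp
    have coef: "phi_ab \<alpha> \<alpha> t * \<alpha> + psi_ab \<alpha> \<alpha> t = \<alpha> powr t"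
    proof -
      have "phi_ab \<alpha> \<alpha> t * \<alpha> + psi_ab \<alpha> \<alpha> t = t * (\<alpha> powr (t - 1) * \<alpha>) + (1 - t) * \<alpha> powr t"
        by (simp add: phi_ab_def psi_ab_def mult.assoc)
      also have "\<dots> = \<alpha> powr t" unfolding pw by (simp add: algebra_simps)
      finally show ?thesis .
    qed
    have "thompson_geo X t Y = phi_ab \<alpha> \<beta> t *\<^sub>R Y + psi_ab \<alpha> \<beta> t *\<^sub>R X" by (rule th)
    also have "\<dots> = (phi_ab \<alpha> \<alpha> t * \<alpha> + psi_ab \<alpha> \<alpha> t) *\<^sub>R X"
      unfolding ab2[symmetric] by (simp add: Ya scaleR_add_left)
    also have "\<dots> = \<alpha> powr t *\<^sub>R X" unfolding coef ..
    finally have "thompson_geo X t Y = \<alpha> powr t *\<^sub>R X" .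
    moreover have "geo_mean X t Y = \<alpha> powr t *\<^sub>R X"
      unfolding geo using ab2 by (simp add: cf1_def cf0_def)
    ultimately show ?thesis by simp
  qed
qed


end
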